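(* Let $p$ be a prime and $n$ a natural number. Let $(A,+,\circ)$ be a left brace of cardinality $p^{n}$ whose additive group is elementary abelian (an $\mathbb F_p$-brace), and let $a\in A$, $a\ne0$, be such that $a^{\circ p}=a\circ a\circ\cdots\circ a$ ($p$ factors) equals $0$. Then there are at least $p^{n/p}$ elements $b\in A$ such that $a*b=0$.
   Context: A (left) brace is a set $A$ with operations $+,\circ$ such that $(A,+)$ is an abelian group, $(A,\circ)$ is a group, and $a\circ(b+c)+a=a\circ b+a\circ c$; the identity of $(A,\circ)$ is $0$, and $a*b=a\circ b-a-b$. *)

theory Defs
  imports Complex_Main "HOL-Computational_Algebra.Primes" "HOL-Algebra.Group"
begin

definition add_grp :: "'a set \<Rightarrow> ('a \<Rightarrow> 'a \<Rightarrow> 'a) \<Rightarrow> 'a \<Rightarrow> 'a monoid" where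
  "add_grp A add z = \<lparr>carrier = A, mult = add, one = z\<rparr>"

definition circ_grp :: "'a set \<Rightarrow> ('a \<Rightarrow> 'a \<Rightarrow> 'a) \<Rightarrow> 'a \<Rightarrow> 'a monoid" where
  "circ_grp A circ z = \<lparr>carrier = A, mult = circ, one = z\<rparr>"

definition left_brace :: "'a set \<Rightarrow> ('a \<Rightarrow> 'a \<Rightarrow> 'a) \<Rightarrow> ('a \<Rightarrow> 'a \<Rightarrow> 'a) \<Rightarrow> 'a \<Rightarrow> bool" where
  "left_brace A add circ z \<longleftrightarrow>
     comm_group (add_grp A add z) \<and> group (circ_grp A circ z) \<and>
     (\<forall>a\<in>A. \<forall>b\<in>A. \<forall>c\<in>A. add (circ a (add b c)) a = add (circ a b) (circ a c))"

definition brace_neg :: "'a set \<Rightarrow> ('a \<Rightarrow> 'a \<Rightarrow> 'a) \<Rightarrow> 'a \<Rightarrow> 'a \<Rightarrow> 'a" where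
  "brace_neg A add z x = inv\<^bsub>add_grp A add z\<^esub> x"

definition brace_star :: "'a set \<Rightarrow> ('a \<Rightarrow> 'a \<Rightarrow> 'a) \<Rightarrow> ('a \<Rightarrow> 'a \<Rightarrow> 'a) \<Rightarrow> 'a \<Rightarrow> 'a \<Rightarrow> 'a \<Rightarrow> 'a" where
  "brace_star A add circ z a b =
     add (add (circ a b) (brace_neg A add z a)) (brace_neg A add z b)"

definition elementary_abelian :: "nat \<Rightarrow> 'a set \<Rightarrow> ('a \<Rightarrow> 'a \<Rightarrow> 'a) \<Rightarrow> 'a \<Rightarrow> bool" where
  "elementary_abelian p A add z \<longleftrightarrow> (\<forall>x\<in>A. x [^]\<^bsub>add_grp A add z\<^esub> p = z)"

end

theory Submission
  imports Defs
begin

fun gsum :: "('a,'b) monoid_scheme \<Rightarrow> (nat \<Rightarrow> 'a) \<Rightarrow> nat \<Rightarrow> 'a" where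
  "gsum G g 0 = g 0"
| "gsum G g (Suc m) = gsum G g m \<otimes>\<^bsub>G\<^esub> g (Suc m)"

context comm_group begin

lemma gsum_closed: "(\<And>i. i \<le> m \<Longrightarrow> g i \<in> carrier G) \<Longrightarrow> gsum G g m \<in> carrier G"
  by (induction m) auto

lemma gsum_cong: "(\<And>i. i \<le> m \<Longrightarrow> g i = h i) \<Longrightarrow> gsum G g m = gsum G h m"
  by (induction m) auto

lemma gsum_one: "(\<And>i. i \<le> m \<Longrightarrow> g i = \<one>) \<Longrightarrow> gsum G g m = \<one>"
  by (induction m) auto

lemma gsum_mult:
  "(\<And>i. i \<le> m \<Longrightarrow> g i \<in> carrier G) \<Longrightarrow> (\<And>i. i \<le> m \<Longrightarrow> h i \<in> carrier G) \<Longrightarrow>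
   gsum G (\<lambda>i. g i \<otimes> h i) m = gsum G g m \<otimes> gsum G h m"
proof (induction m)
  case 0 then show ?case by simp
next
  case (Suc m)
  have c: "gsum G g m \<in> carrier G" "gsum G h m \<in> carrier G" using Suc.prems by (auto intro: gsum_closed)
  have "gsum G (\<lambda>i. g i \<otimes> h i) (Suc m) = (gsum G g m \<otimes> gsum G h m) \<otimes> (g (Suc m) \<otimes> h (Suc m))"
    using Suc by simp
  also have "\<dots> = gsum G g (Suc m) \<otimes> gsum G h (Suc m)"
    using c Suc.prems[of "Suc m"] by (simp add: m_ac)
  finally show ?case .
qed

lemma gsum_shift:
  "(\<And>i. i \<le> Suc m \<Longrightarrow> g i \<in> carrier G) \<Longrightarrow> gsum G g (Suc m) = g 0 \<otimes> gsum G (\<lambda>i. g (Suc i)) m"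
proof (induction m)
  case 0 then show ?case by simp
next
  case (Suc m)
  have c: "gsum G (\<lambda>i. g (Suc i)) m \<in> carrier G" using Suc.prems by (auto intro: gsum_closed)
  show ?case using Suc c by (simp add: m_assoc)
qed

lemma gsum_hom:
  assumes "\<And>x y. x \<in> carrier G \<Longrightarrow> y \<in> carrier G \<Longrightarrow> h (x \<otimes> y) = h x \<otimes> h y"
    "\<And>i. i \<le> m \<Longrightarrow> g i \<in> carrier G"
  shows "h (gsum G g m) = gsum G (\<lambda>i. h (g i)) m"
  using assms(2)
proof (induction m)
  case 0 then show ?case by simp
next
  case (Suc m)
  then show ?case using assms(1) gsum_closed[of m g] by simp
qed

lemma endo_one:
  assumes "\<And>x y. x \<in> carrier G \<Longrightarrow> y \<in> carrier G \<Longrightarrow> L (x \<otimes> y) = L x \<otimes> L y"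
    "\<And>x. x \<in> carrier G \<Longrightarrow> L x \<in> carrier G"
  shows "L \<one> = \<one>"
proof -
  have "L \<one> \<otimes> L \<one> = L \<one>" using assms(1)[of \<one> \<one>] by simp
  then show ?thesis using assms(2)[of \<one>] by simp
qed

lemma endo_pow:
  assumes "\<And>x y. x \<in> carrier G \<Longrightarrow> y \<in> carrier G \<Longrightarrow> L (x \<otimes> y) = L x \<otimes> L y"
    "\<And>x. x \<in> carrier G \<Longrightarrow> L x \<in> carrier G" "x \<in> carrier G"
  shows "L (x [^] (k::nat)) = (L x) [^] k"
proof (induction k)
  case 0 then show ?case using endo_one[OF assms(1,2)] by simp
next
  case (Suc k) then show ?case using assms by simp
qed

lemma funpow_closed:
  assumes "\<And>x. x \<in> carrier G \<Longrightarrow> L x \<in> carrier G" "x \<in> carrier G"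
  shows "(L ^^ i) x \<in> carrier G"
  by (induction i) (auto simp: assms)

lemma binom_endo:
  assumes hom: "\<And>x y. x \<in> carrier G \<Longrightarrow> y \<in> carrier G \<Longrightarrow> L (x \<otimes> y) = L x \<otimes> L y"
    and cl: "\<And>x. x \<in> carrier G \<Longrightarrow> L x \<in> carrier G" and x: "x \<in> carrier G"
  shows "((\<lambda>y. L y \<otimes> y [^] (q::nat)) ^^ j) x =
     gsum G (\<lambda>i. ((L ^^ i) x) [^] ((j choose i) * q ^ (j - i))) j"
proof (induction j)
  case 0 then show ?case using x by simp
next
  case (Suc j)
  define g where "g i = ((L ^^ i) x) [^] ((j choose i) * q ^ (j - i))" for i
  have gc: "g i \<in> carrier G" for i unfolding g_def using funpow_closed[OF cl x] by simp
  have S: "gsum G g j \<in> carrier G" using gc by (simp add: gsum_closed)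
  have "((\<lambda>y. L y \<otimes> y [^] q) ^^ Suc j) x = L (gsum G g j) \<otimes> (gsum G g j) [^] q"
    using Suc by (simp add: g_def[abs_def])
  also have "L (gsum G g j) = gsum G (\<lambda>i. L (g i)) j"
    by (rule gsum_hom[OF hom gc])
  also have "\<dots> = gsum G (\<lambda>i. ((L ^^ Suc i) x) [^] ((j choose i) * q ^ (j - i))) j"
    unfolding g_def by (rule gsum_cong) (simp add: endo_pow[OF hom cl] funpow_closed[OF cl x])
  also have "(gsum G g j) [^] q = gsum G (\<lambda>i. (g i) [^] q) j"
    by (rule gsum_hom[OF _ gc]) (simp add: nat_pow_distrib)
  also have "\<dots> = gsum G (\<lambda>i. ((L ^^ i) x) [^] ((j choose i) * q ^ (Suc j - i))) j"
    unfolding g_def by (rule gsum_cong) (simp add: nat_pow_pow funpow_closed[OF cl x] Suc_diff_le ac_simps)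
  finally have lhs: "((\<lambda>y. L y \<otimes> y [^] q) ^^ Suc j) x =
     gsum G (\<lambda>i. ((L ^^ Suc i) x) [^] ((j choose i) * q ^ (j - i))) j \<otimes>
     gsum G (\<lambda>i. ((L ^^ i) x) [^] ((j choose i) * q ^ (Suc j - i))) j" .
  define a where "a i = ((L ^^ i) x) [^] ((case i of 0 \<Rightarrow> 0 | Suc k \<Rightarrow> j choose k) * q ^ (Suc j - i))" for i
  define b where "b i = ((L ^^ i) x) [^] ((j choose i) * q ^ (Suc j - i))" for i
  have ac: "a i \<in> carrier G" and bc: "b i \<in> carrier G" for i
    unfolding a_def b_def using funpow_closed[OF cl x] by simp_all
  have "gsum G (\<lambda>i. ((L ^^ i) x) [^] ((Suc j choose i) * q ^ (Suc j - i))) (Suc j)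
      = gsum G (\<lambda>i. a i \<otimes> b i) (Suc j)"
  proof (rule gsum_cong)
    fix i assume "i \<le> Suc j"
    have "(Suc j choose i) = (case i of 0 \<Rightarrow> 0 | Suc k \<Rightarrow> j choose k) + (j choose i)"
      by (cases i) simp_all
    then show "((L ^^ i) x) [^] ((Suc j choose i) * q ^ (Suc j - i)) = a i \<otimes> b i"
      unfolding a_def b_def using funpow_closed[OF cl x]
      by (simp add: nat_pow_mult distrib_right)
  qed
  also have "\<dots> = gsum G a (Suc j) \<otimes> gsum G b (Suc j)"
    by (rule gsum_mult) (simp_all add: ac bc)
  also have "gsum G a (Suc j) = a 0 \<otimes> gsum G (\<lambda>i. a (Suc i)) j"
    by (rule gsum_shift) (simp add: ac)
  also have "a 0 = \<one>" by (simp add: a_def)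
  also have "gsum G (\<lambda>i. a (Suc i)) j = gsum G (\<lambda>i. ((L ^^ Suc i) x) [^] ((j choose i) * q ^ (j - i))) j"
    by (rule gsum_cong) (simp add: a_def del: funpow.simps)
  also have "gsum G b (Suc j) = gsum G b j" using bc[of j] gsum_closed[of j b] bc by (simp add: b_def[of "Suc j"] binomial_eq_0)
  also have "gsum G b j = gsum G (\<lambda>i. ((L ^^ i) x) [^] ((j choose i) * q ^ (Suc j - i))) j"
    by (simp add: b_def[abs_def])
  finally have rhs: "gsum G (\<lambda>i. ((L ^^ i) x) [^] ((Suc j choose i) * q ^ (Suc j - i))) (Suc j) =
     \<one> \<otimes> gsum G (\<lambda>i. ((L ^^ Suc i) x) [^] ((j choose i) * q ^ (j - i))) j \<otimes>
     gsum G (\<lambda>i. ((L ^^ i) x) [^] ((j choose i) * q ^ (Suc j - i))) j" .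
  have X: "gsum G (\<lambda>i. ((L ^^ Suc i) x) [^] ((j choose i) * q ^ (j - i))) j \<in> carrier G"
    by (rule gsum_closed) (simp only: nat_pow_closed funpow_closed[OF cl x])
  show ?case unfolding lhs rhs using X by (simp only: l_one)
qed

end

lemma dvd_aux: assumes "prime (p::nat)" shows "p dvd (p-1)^p + 1"
proof (cases "p = 2")
  case True then show ?thesis by simp
next
  case False
  have "odd p" using assms False prime_ge_2_nat[OF assms] by (intro prime_odd_nat) auto
  have p1: "p \<ge> 1" using prime_ge_2_nat[OF assms] by simp
  have "int p dvd (int p - 1)^p + 1"
  proof -
    have m: "(int p - 1) mod int p = (-1) mod int p" by (simp add: mod_diff_left_eq[symmetric])
    have "(int p - 1)^p mod int p = ((-1)^p) mod int p"
      by (metis m power_mod)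
    also have "(-1::int)^p = -1" using \<open>odd p\<close> by simp
    finally have "((int p - 1)^p + 1) mod int p = (-1 + 1) mod int p"
      by (metis mod_add_left_eq)
    then show ?thesis by (simp add: dvd_eq_mod_eq_0)
  qed
  moreover have "int ((p-1)^p + 1) = (int p - 1)^p + 1" using p1 by (simp add: of_nat_diff)
  ultimately show ?thesis by (metis int_dvd_int_iff)
qed
lemma fin: fixes k p n :: nat assumes "p ^ n \<le> k ^ p" "prime p"
  shows "real k \<ge> real p powr (real n / real p)"
proof -
  have p0: "p > 0" using prime_gt_0_nat[OF assms(2)] .
  have k: "k \<ge> 1"
  proof (rule ccontr)
    assume "\<not> k \<ge> 1" then have "k = 0" by simp
    then have "k ^ p = 0" using p0 by simp
    moreover have "p ^ n > 0" using p0 by simp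
    ultimately show False using assms(1) by linarith
  qed
  have "real p powr (real n / real p) = (real p ^ n) powr (1 / real p)"
    using p0 by (simp add: powr_realpow[symmetric] powr_powr)
  also have "\<dots> \<le> (real k ^ p) powr (1 / real p)"
    by (rule powr_mono2) (use assms in \<open>simp_all flip: of_nat_power\<close>)
  also have "\<dots> = real k"
    using p0 k by (simp add: powr_realpow[symmetric] powr_powr)
  finally show ?thesis .
qed

theorem proposition3p5:
  fixes p n :: nat and A :: "'a set" and add circ :: "'a \<Rightarrow> 'a \<Rightarrow> 'a" and z a :: 'a
  assumes "prime p"
    and "left_brace A add circ z"
    and "finite A" and "card A = p ^ n"
    and "elementary_abelian p A add z"
    and "a \<in> A" and "a \<noteq> z"
    and "a [^]\<^bsub>circ_grp A circ z\<^esub> p = z"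
  shows "real (card {b \<in> A. brace_star A add circ z a b = z}) \<ge> real p powr (real n / real p)"
proof -
  define G where "G = add_grp A add z"
  define H where "H = circ_grp A circ z"
  have cG: "A = carrier G" "z = one G" and mG: "add = mult G" by (simp_all add: G_def add_grp_def)
  have cH: "A = carrier H" "z = one H" and mH: "circ = mult H" by (simp_all add: H_def circ_grp_def)
  interpret G: comm_group G using assms(2) by (simp add: left_brace_def G_def)
  interpret H: group H using assms(2) by (simp add: left_brace_def H_def)
  have dist: "\<And>b x y. b \<in> A \<Longrightarrow> x \<in> A \<Longrightarrow> y \<in> A \<Longrightarrow>
     (b \<otimes>\<^bsub>H\<^esub> (x \<otimes>\<^bsub>G\<^esub> y)) \<otimes>\<^bsub>G\<^esub> b = (b \<otimes>\<^bsub>H\<^esub> x) \<otimes>\<^bsub>G\<^esub> (b \<otimes>\<^bsub>H\<^esub> y)"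
    using assms(2) unfolding left_brace_def mG mH by blast
  have elem: "\<And>x. x \<in> A \<Longrightarrow> x [^]\<^bsub>G\<^esub> p = z"
    using assms(5) by (simp add: elementary_abelian_def G_def)
  have p1: "p \<ge> 1" using assms(1) prime_gt_0_nat by (simp add: Suc_leI)
  define lam where "lam b x = (b \<otimes>\<^bsub>H\<^esub> x) \<otimes>\<^bsub>G\<^esub> inv\<^bsub>G\<^esub> b" for b x
  have lam_cl: "\<And>b x. b \<in> A \<Longrightarrow> x \<in> A \<Longrightarrow> lam b x \<in> A"
    unfolding lam_def using cG cH by (metis G.inv_closed G.m_closed H.m_closed)
  have lam_add: "\<And>b x y. b \<in> A \<Longrightarrow> x \<in> A \<Longrightarrow> y \<in> A \<Longrightarrow>
     lam b (x \<otimes>\<^bsub>G\<^esub> y) = lam b x \<otimes>\<^bsub>G\<^esub> lam b y"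
  proof -
    fix b x y assume b: "b \<in> A" and x: "x \<in> A" and y: "y \<in> A"
    have c: "b \<otimes>\<^bsub>H\<^esub> x \<in> A" "b \<otimes>\<^bsub>H\<^esub> y \<in> A" "b \<otimes>\<^bsub>H\<^esub> (x \<otimes>\<^bsub>G\<^esub> y) \<in> A"
      "inv\<^bsub>G\<^esub> b \<in> A"
      using b x y cG cH by (metis G.m_closed H.m_closed G.inv_closed)+
    have "lam b x \<otimes>\<^bsub>G\<^esub> lam b y = ((b \<otimes>\<^bsub>H\<^esub> x) \<otimes>\<^bsub>G\<^esub> (b \<otimes>\<^bsub>H\<^esub> y)) \<otimes>\<^bsub>G\<^esub> inv\<^bsub>G\<^esub> b \<otimes>\<^bsub>G\<^esub> inv\<^bsub>G\<^esub> b"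
      unfolding lam_def using c cG by (simp add: G.m_ac)
    also have "\<dots> = (b \<otimes>\<^bsub>H\<^esub> (x \<otimes>\<^bsub>G\<^esub> y)) \<otimes>\<^bsub>G\<^esub> (b \<otimes>\<^bsub>G\<^esub> inv\<^bsub>G\<^esub> b) \<otimes>\<^bsub>G\<^esub> inv\<^bsub>G\<^esub> b"
      unfolding dist[OF b x y, symmetric] using c b cG by (simp add: G.m_assoc)
    also have "\<dots> = lam b (x \<otimes>\<^bsub>G\<^esub> y)"
      unfolding lam_def using c b cG by simp
    finally show "lam b (x \<otimes>\<^bsub>G\<^esub> y) = lam b x \<otimes>\<^bsub>G\<^esub> lam b y" by simp
  qed
  have lam_z: "\<And>x. x \<in> A \<Longrightarrow> lam z x = x"
    unfolding lam_def using cG cH by (metis G.inv_one G.r_one H.l_one)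
  have lam_comp: "\<And>b c x. b \<in> A \<Longrightarrow> c \<in> A \<Longrightarrow> x \<in> A \<Longrightarrow>
      lam (b \<otimes>\<^bsub>H\<^esub> c) x = lam b (lam c x)"
  proof -
    fix b c x assume b: "b \<in> A" and c: "c \<in> A" and x: "x \<in> A"
    have one: "lam b z = z" unfolding lam_def using b cG cH by (metis G.r_inv H.r_one)
    have inv: "lam b (inv\<^bsub>G\<^esub> c) = inv\<^bsub>G\<^esub> (lam b c)"
    proof -
      have "lam b c \<otimes>\<^bsub>G\<^esub> lam b (inv\<^bsub>G\<^esub> c) = z"
        using lam_add[OF b c, of "inv\<^bsub>G\<^esub> c"] one c cG by simp
      then show ?thesis using lam_cl b c cG
        by (metis G.inv_closed G.inv_equality G.m_comm)
    qed
    have cx: "c \<otimes>\<^bsub>H\<^esub> x \<in> A" "b \<otimes>\<^bsub>H\<^esub> c \<in> A" "b \<otimes>\<^bsub>H\<^esub> (c \<otimes>\<^bsub>H\<^esub> x) \<in> A"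
      using b c x cH by (metis H.m_closed)+
    have "lam b (lam c x) = lam b (c \<otimes>\<^bsub>H\<^esub> x) \<otimes>\<^bsub>G\<^esub> inv\<^bsub>G\<^esub> (lam b c)"
      unfolding lam_def[of c x] using lam_add[OF b cx(1), of "inv\<^bsub>G\<^esub> c"] inv c cG by simp
    also have "\<dots> = ((b \<otimes>\<^bsub>H\<^esub> (c \<otimes>\<^bsub>H\<^esub> x)) \<otimes>\<^bsub>G\<^esub> inv\<^bsub>G\<^esub> b) \<otimes>\<^bsub>G\<^esub> (b \<otimes>\<^bsub>G\<^esub> inv\<^bsub>G\<^esub> (b \<otimes>\<^bsub>H\<^esub> c))"
      unfolding lam_def using b cx cG by (simp add: G.inv_mult_group)
    also have "\<dots> = (b \<otimes>\<^bsub>H\<^esub> (c \<otimes>\<^bsub>H\<^esub> x)) \<otimes>\<^bsub>G\<^esub> inv\<^bsub>G\<^esub> (b \<otimes>\<^bsub>H\<^esub> c)"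
    proof -
      have "inv\<^bsub>G\<^esub> b \<otimes>\<^bsub>G\<^esub> (b \<otimes>\<^bsub>G\<^esub> inv\<^bsub>G\<^esub> (b \<otimes>\<^bsub>H\<^esub> c)) = inv\<^bsub>G\<^esub> (b \<otimes>\<^bsub>H\<^esub> c)"
        using b cx cG by (simp add: G.m_assoc[symmetric])
      then show ?thesis using b cx cG by (simp add: G.m_assoc)
    qed
    also have "\<dots> = lam (b \<otimes>\<^bsub>H\<^esub> c) x"
      unfolding lam_def using b c x cx cG cH by (simp add: H.m_assoc)
    finally show "lam (b \<otimes>\<^bsub>H\<^esub> c) x = lam b (lam c x)" by simp
  qed
  have lam_pow: "\<And>x. x \<in> A \<Longrightarrow> (lam a ^^ i) x = lam (a [^]\<^bsub>H\<^esub> i) x" for i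
  proof (induction i)
    case 0 then show ?case using lam_z cH by simp
  next
    case (Suc i)
    have "(lam a ^^ Suc i) x = lam a (lam (a [^]\<^bsub>H\<^esub> i) x)" using Suc by simp
    also have "\<dots> = lam (a \<otimes>\<^bsub>H\<^esub> a [^]\<^bsub>H\<^esub> i) x"
      using lam_comp assms(6) Suc cH by (metis H.nat_pow_closed)
    also have "a \<otimes>\<^bsub>H\<^esub> a [^]\<^bsub>H\<^esub> i = a [^]\<^bsub>H\<^esub> Suc i"
      using assms(6) cH by (metis H.nat_pow_Suc2)
    finally show ?case .
  qed
  have lamp: "\<And>x. x \<in> A \<Longrightarrow> (lam a ^^ p) x = x"
  proof -
    fix x assume x: "x \<in> A"
    have "(lam a ^^ p) x = lam (a [^]\<^bsub>H\<^esub> p) x" using lam_pow[OF x] .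
    also have "a [^]\<^bsub>H\<^esub> p = z" using assms(8) unfolding H_def .
    finally show "(lam a ^^ p) x = x" using lam_z[OF x] by simp
  qed
  have invpow: "\<And>x. x \<in> A \<Longrightarrow> inv\<^bsub>G\<^esub> x = x [^]\<^bsub>G\<^esub> (p - 1)"
  proof -
    fix x assume x: "x \<in> A"
    have ps: "p = Suc (p - 1)" using p1 by simp
    have "x [^]\<^bsub>G\<^esub> (p - 1) \<otimes>\<^bsub>G\<^esub> x = x [^]\<^bsub>G\<^esub> p"
      by (subst (2) ps) (simp only: nat_pow_Suc)
    also have "\<dots> = \<one>\<^bsub>G\<^esub>" using elem[OF x] cG by simp
    finally have e: "x [^]\<^bsub>G\<^esub> (p - 1) \<otimes>\<^bsub>G\<^esub> x = \<one>\<^bsub>G\<^esub>" .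
    show "inv\<^bsub>G\<^esub> x = x [^]\<^bsub>G\<^esub> (p - 1)"
      by (rule G.inv_equality[OF e]) (use x cG in simp_all)
  qed
  define f where "f y = lam a y \<otimes>\<^bsub>G\<^esub> y [^]\<^bsub>G\<^esub> (p - 1)" for y
  have f_hom: "\<And>x y. x \<in> carrier G \<Longrightarrow> y \<in> carrier G \<Longrightarrow> f (x \<otimes>\<^bsub>G\<^esub> y) = f x \<otimes>\<^bsub>G\<^esub> f y"
    unfolding f_def using lam_add[OF assms(6)] lam_cl[OF assms(6)] cG
    by (simp add: G.nat_pow_distrib G.m_ac)
  have f_cl: "\<And>x. x \<in> carrier G \<Longrightarrow> f x \<in> carrier G"
    unfolding f_def using lam_cl[OF assms(6)] cG by simp
  have ps: "p = Suc (Suc (p - 2))" using prime_ge_2_nat[OF assms(1)] by simp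
  have fp: "\<And>x. x \<in> A \<Longrightarrow> (f ^^ p) x = z"
  proof -
    fix x assume x: "x \<in> A"
    define g where "g i = ((lam a ^^ i) x) [^]\<^bsub>G\<^esub> ((p choose i) * (p - 1) ^ (p - i))" for i
    have lcl: "\<And>y. y \<in> carrier G \<Longrightarrow> lam a y \<in> carrier G" using lam_cl[OF assms(6)] cG by simp
    have xG: "x \<in> carrier G" using x cG by simp
    have gc: "g i \<in> carrier G" for i unfolding g_def using G.funpow_closed[OF lcl xG] by simp
    have "(f ^^ p) x = gsum G g p"
      unfolding f_def[abs_def] g_def[abs_def]
      by (rule G.binom_endo) (use lam_add[OF assms(6)] lcl x cG in simp_all)
    also have "\<dots> = g 0 \<otimes>\<^bsub>G\<^esub> gsum G (\<lambda>i. g (Suc i)) (Suc (p - 2))"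
      by (subst ps, rule G.gsum_shift) (simp add: gc)
    also have "gsum G (\<lambda>i. g (Suc i)) (Suc (p - 2)) = gsum G (\<lambda>i. g (Suc i)) (p - 2) \<otimes>\<^bsub>G\<^esub> g p"
      using ps by (metis gsum.simps(2))
    also have "gsum G (\<lambda>i. g (Suc i)) (p - 2) = \<one>\<^bsub>G\<^esub>"
    proof (rule G.gsum_one)
      fix i assume i: "i \<le> p - 2"
      have "p dvd (p choose Suc i)"
        by (rule dvd_choose_prime) (use i ps assms(1) in auto)
      then obtain k where k: "(p choose Suc i) * (p - 1) ^ (p - Suc i) = p * k"
        by (metis dvd_mult2 dvdE)
      have y: "(lam a ^^ Suc i) x \<in> A" using G.funpow_closed[OF lcl xG, where i="Suc i"] cG by simp
      have "g (Suc i) = (((lam a ^^ Suc i) x) [^]\<^bsub>G\<^esub> p) [^]\<^bsub>G\<^esub> k"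
        unfolding g_def k using y cG by (simp add: G.nat_pow_pow)
      also have "\<dots> = \<one>\<^bsub>G\<^esub>" using elem[OF y] cG by simp
      finally show "g (Suc i) = \<one>\<^bsub>G\<^esub>" .
    qed
    also have "g p = x" unfolding g_def using lamp[OF x] x cG by simp
    also have "g 0 = x [^]\<^bsub>G\<^esub> ((p - 1) ^ p)" unfolding g_def by simp
    also have "x [^]\<^bsub>G\<^esub> ((p - 1) ^ p) \<otimes>\<^bsub>G\<^esub> (\<one>\<^bsub>G\<^esub> \<otimes>\<^bsub>G\<^esub> x) = x [^]\<^bsub>G\<^esub> ((p - 1) ^ p + 1)"
      using x cG by (simp add: G.nat_pow_mult[symmetric])
    also obtain k where "(p - 1) ^ p + 1 = p * k" using dvd_aux[OF assms(1)] by (metis dvdE)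
    then have "x [^]\<^bsub>G\<^esub> ((p - 1) ^ p + 1) = (x [^]\<^bsub>G\<^esub> p) [^]\<^bsub>G\<^esub> k"
      using x cG by (simp add: G.nat_pow_pow)
    also have "\<dots> = z" using elem[OF x] cG by simp
    finally show "(f ^^ p) x = z" .
  qed
  interpret fh: group_hom G G f
    by unfold_locales (auto intro!: homI simp: f_hom f_cl)
  define K where "K j = {x \<in> A. (f ^^ j) x = z}" for j
  have Ksub: "K j \<subseteq> A" for j unfolding K_def by auto
  have Kfin: "finite (K j)" for j using Ksub assms(3) finite_subset by metis
  have Kstep: "card (K (Suc j)) \<le> card (K j) * card (K 1)" for j
  proof -
    define s where "s y = (SOME w. w \<in> K (Suc j) \<and> f w = y)" for y
    have s: "s (f x) \<in> K (Suc j) \<and> f (s (f x)) = f x" if "x \<in> K (Suc j)" for x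
      unfolding s_def by (rule someI[of _ x]) (use that in simp)
    define \<phi> where "\<phi> x = (f x, x \<otimes>\<^bsub>G\<^esub> inv\<^bsub>G\<^esub> (s (f x)))" for x
    have "inj_on \<phi> (K (Suc j))"
    proof (rule inj_onI)
      fix x y assume x: "x \<in> K (Suc j)" and y: "y \<in> K (Suc j)" and e: "\<phi> x = \<phi> y"
      then have fe: "f x = f y" unfolding \<phi>_def by simp
      then have "x \<otimes>\<^bsub>G\<^esub> inv\<^bsub>G\<^esub> (s (f x)) = y \<otimes>\<^bsub>G\<^esub> inv\<^bsub>G\<^esub> (s (f x))"
        using e unfolding \<phi>_def by simp
      moreover have "s (f x) \<in> A" using s[OF x] Ksub by blast
      moreover have "x \<in> carrier G" "y \<in> carrier G" using x y Ksub cG by auto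
      ultimately show "x = y" using cG by simp
    qed
    moreover have "\<phi> ` K (Suc j) \<subseteq> K j \<times> K 1"
    proof
      fix w assume "w \<in> \<phi> ` K (Suc j)"
      then obtain x where x: "x \<in> K (Suc j)" and w: "w = \<phi> x" by blast
      have xA: "x \<in> A" and fx: "(f ^^ Suc j) x = z" using x unfolding K_def by auto
      have sA: "s (f x) \<in> A" and sf: "f (s (f x)) = f x" using s[OF x] Ksub by blast+
      have "f x \<in> K j" unfolding K_def using fx xA f_cl cG by (simp add: funpow_Suc_right del: funpow.simps)
      moreover have "x \<otimes>\<^bsub>G\<^esub> inv\<^bsub>G\<^esub> (s (f x)) \<in> K 1"
        unfolding K_def using xA sA sf cG f_cl by (simp add: fh.hom_mult fh.hom_inv)
      ultimately show "w \<in> K j \<times> K 1" unfolding w \<phi>_def by simp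
    qed
    ultimately have "card (K (Suc j)) \<le> card (K j \<times> K 1)"
      by (intro card_inj_on_le) (simp_all add: Kfin)
    then show ?thesis by (simp add: card_cartesian_product)
  qed
  have Kpow: "card (K j) \<le> card (K 1) ^ j" for j
  proof (induction j)
    case 0
    have "K 0 = {z}" unfolding K_def using assms(6) cG by auto
    then show ?case by simp
  next
    case (Suc j)
    have "card (K (Suc j)) \<le> card (K j) * card (K 1)" by (rule Kstep)
    also have "\<dots> \<le> card (K 1) ^ j * card (K 1)" using Suc by simp
    finally show ?case by (simp add: mult.commute)
  qed
  have "K p = A" unfolding K_def using fp by auto
  then have "p ^ n \<le> card (K 1) ^ p" using Kpow[of p] assms(4) by simp
  then have fin1: "real (card (K 1)) \<ge> real p powr (real n / real p)" by (rule fin[OF _ assms(1)])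
  have "{b \<in> A. brace_star A add circ z a b = z} = K 1"
  proof -
    have "brace_star A add circ z a b = f b" if "b \<in> A" for b
      unfolding brace_star_def brace_neg_def f_def lam_def
      using that invpow[OF that] by (simp add: G_def H_def add_grp_def circ_grp_def)
    then show ?thesis unfolding K_def by auto
  qed
  then show ?thesis using fin1 by simp
qed

end
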